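(* Let $K$ be an algebraically closed field of characteristic zero, $\deg_1$ the standard homogeneous degree on $K[x_1,\dots,x_n]$, $\Phi=(f_1,\dots,f_n)$ a polynomial automorphism of $K^n$, $d_i=\deg_1(f_i)$, $\deg_2$ the weighted degree with weights $d_i$ on $x_i$, $\nabla=d_1+\dots+d_n-n$, and assume the ideal $I=\{Q:Q(\overline{f_1},\dots,\overline{f_n})=0\}$ equals $(R)$ for an irreducible $R$ with $\frac{\partial R}{\partial x_n}\ne0$. Let $P$ be a nonzero polynomial and $k\in\mathbb{N}$ with $\tilde P\in(R^k)\setminus(R^{k+1})$. Then: (i) $\deg_1(\frac{\partial^kP}{\partial x_n^k}\circ\Phi)=\deg_2(\frac{\partial^kP}{\partial x_n^k})=\deg_2(P)-kd_n$; (ii) $\deg_1(P\circ\Phi)\ge\deg_2(P)-k\nabla$; (iii) $\deg_1(P\circ\Phi)\ge k(\deg_2(R)-\nabla)$.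
   Context: $\overline{f}$ denotes the homogeneous component of highest degree of $f$ and $\tilde P$ the leading term of $P$ with respect to $\deg_2$. *)

theory Defs
  imports "HOL-Library.Poly_Mapping" "HOL-Computational_Algebra.Polynomial"
begin

text \<open>Multivariate polynomials over a coefficient type 'a, in variables x_0, x_1, ...
  (variable x_(i+1) of the paper is index i here).\<close>

type_synonym 'a mpoly = "(nat \<Rightarrow>\<^sub>0 nat) \<Rightarrow>\<^sub>0 'a"

definition monom :: "(nat \<Rightarrow>\<^sub>0 nat) \<Rightarrow> 'a::zero \<Rightarrow> 'a mpoly" where
  "monom m c = Poly_Mapping.single m c"

definition Var :: "nat \<Rightarrow> 'a::{zero,one} mpoly" where
  "Var i = Poly_Mapping.single (Poly_Mapping.single i 1) 1"

definition polys :: "nat \<Rightarrow> 'a::zero mpoly set" where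
  "polys n = {p. \<forall>m \<in> Poly_Mapping.keys p. \<forall>i \<in> Poly_Mapping.keys m. i < n}"

definition subst :: "(nat \<Rightarrow> 'a::comm_semiring_1 mpoly) \<Rightarrow> 'a mpoly \<Rightarrow> 'a mpoly" where
  "subst g p = (\<Sum>m\<in>Poly_Mapping.keys p. monom 0 (Poly_Mapping.lookup p m) * (\<Prod>i\<in>Poly_Mapping.keys m. g i ^ Poly_Mapping.lookup m i))"

text \<open>Weighted degree of a monomial / polynomial (weight w i on variable i);
  the degree of the zero polynomial is set to 0 (only used for nonzero polynomials).\<close>
definition mon_wdeg :: "(nat \<Rightarrow> nat) \<Rightarrow> (nat \<Rightarrow>\<^sub>0 nat) \<Rightarrow> nat" where
  "mon_wdeg w m = (\<Sum>i\<in>Poly_Mapping.keys m. w i * Poly_Mapping.lookup m i)"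

definition wdeg :: "(nat \<Rightarrow> nat) \<Rightarrow> 'a::zero mpoly \<Rightarrow> int" where
  "wdeg w p = int (Max (insert 0 (mon_wdeg w ` Poly_Mapping.keys p)))"

definition tdeg :: "'a::zero mpoly \<Rightarrow> int" where
  "tdeg p = wdeg (\<lambda>_. 1) p"

definition top_comp :: "(nat \<Rightarrow> nat) \<Rightarrow> 'a::comm_monoid_add mpoly \<Rightarrow> 'a mpoly" where
  "top_comp w p = (\<Sum>m\<in>{m \<in> Poly_Mapping.keys p. int (mon_wdeg w m) = wdeg w p}. monom m (Poly_Mapping.lookup p m))"

definition hbar :: "'a::comm_monoid_add mpoly \<Rightarrow> 'a mpoly" where
  "hbar p = top_comp (\<lambda>_. 1) p"

definition pderiv_var :: "nat \<Rightarrow> 'a::comm_semiring_1 mpoly \<Rightarrow> 'a mpoly" where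
  "pderiv_var j p = (\<Sum>m\<in>Poly_Mapping.keys p. monom (m - Poly_Mapping.single j 1) (of_nat (Poly_Mapping.lookup m j) * Poly_Mapping.lookup p m))"

definition pideal :: "nat \<Rightarrow> 'a::comm_semiring_1 mpoly \<Rightarrow> 'a mpoly set" where
  "pideal n a = {a * s | s. s \<in> polys n}"

definition irreducible_in :: "nat \<Rightarrow> 'a::comm_semiring_1 mpoly \<Rightarrow> bool" where
  "irreducible_in n r \<longleftrightarrow> r \<in> polys n \<and> r \<noteq> 0 \<and>
     \<not> (\<exists>u \<in> polys n. r * u = 1) \<and>
     (\<forall>a \<in> polys n. \<forall>b \<in> polys n. r = a * b \<longrightarrow> (\<exists>u \<in> polys n. a * u = 1) \<or> (\<exists>u \<in> polys n. b * u = 1))"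

definition poly_automorphism :: "nat \<Rightarrow> (nat \<Rightarrow> 'a::comm_semiring_1 mpoly) \<Rightarrow> bool" where
  "poly_automorphism n f \<longleftrightarrow> (\<forall>i<n. f i \<in> polys n) \<and>
     (\<exists>g. (\<forall>i<n. g i \<in> polys n) \<and>
          (\<forall>i<n. subst g (f i) = Var i) \<and> (\<forall>i<n. subst f (g i) = Var i))"

definition alg_closed :: "'a::field itself \<Rightarrow> bool" where
  "alg_closed _ \<longleftrightarrow> (\<forall>p :: 'a poly. degree p > 0 \<longrightarrow> (\<exists>x. poly p x = 0))"

end

theory Submission
  imports Defs "Jordan_Normal_Form.Determinant"
begin

abbreviation lk where "lk \<equiv> Poly_Mapping.lookup"
abbreviation ks where "ks \<equiv> Poly_Mapping.keys"
abbreviation sg where "sg \<equiv> Poly_Mapping.single"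

lemma pm_decomp_gen:
  fixes p :: "'a \<Rightarrow>\<^sub>0 'b::comm_monoid_add"
  assumes "finite S" "ks p \<subseteq> S"
  shows "p = (\<Sum>m\<in>S. sg m (lk p m))"
proof (rule poly_mapping_eqI)
  fix k
  have "lk (\<Sum>m\<in>S. sg m (lk p m)) k = (\<Sum>m\<in>S. (lk p m when m = k))"
    by (simp add: lookup_sum lookup_single)
  also have "\<dots> = lk p k"
  proof (cases "k \<in> S")
    case True
    then have "(\<Sum>m\<in>S. (lk p m when m = k)) = (\<Sum>m\<in>{k}. (lk p m when m = k))"
      by (intro sum.mono_neutral_right) (auto simp: assms)
    then show ?thesis by simp
  next
    case False
    then have "lk p k = 0" using assms by (auto simp: in_keys_iff)
    moreover have "(\<Sum>m\<in>S. (lk p m when m = k)) = 0"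
      using False by (intro sum.neutral) (auto simp: when_def)
    ultimately show ?thesis by simp
  qed
  finally show "lk p k = lk (\<Sum>m\<in>S. sg m (lk p m)) k" by simp
qed

lemma pm_decomp:
  fixes p :: "'a \<Rightarrow>\<^sub>0 'b::comm_monoid_add"
  shows "p = (\<Sum>m\<in>ks p. sg m (lk p m))"
  by (rule pm_decomp_gen) auto

lemma keys_add_nat: "ks (a + b :: 'x \<Rightarrow>\<^sub>0 nat) = ks a \<union> ks b"
  by (auto simp: in_keys_iff lookup_add)

lemma prod_single_one:
  fixes m :: "'x \<Rightarrow> 'y::comm_monoid_add"
  shows "(\<Prod>i\<in>S. sg (m i) (1::'c::comm_semiring_1)) = sg (\<Sum>i\<in>S. m i) 1"
  by (induction S rule: infinite_finite_induct) (auto simp: mult_single)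

lemma monom_zero [simp]: "Defs.monom m 0 = 0" by (simp add: monom_def)
lemma monom_add: "Defs.monom m (a + b) = Defs.monom m a + Defs.monom m b"
  by (simp add: monom_def single_add)
lemma monom_mult: "Defs.monom a x * Defs.monom b y = Defs.monom (a + b) (x * y)"
  by (simp add: monom_def mult_single)
lemma monom0_one [simp]: "Defs.monom 0 1 = 1" by (simp add: monom_def)
lemma monom_sum: "Defs.monom m (sum f S) = (\<Sum>x\<in>S. Defs.monom m (f x))"
  by (induction S rule: infinite_finite_induct) (auto simp: monom_add)
lemma monom0_mult: "Defs.monom 0 (x * y) = Defs.monom 0 x * Defs.monom 0 y"
  by (simp add: monom_mult)
lemma monom0_pow: "Defs.monom 0 (x ^ k) = Defs.monom 0 x ^ k"
  by (induction k) (auto simp: monom0_mult)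
lemma monom0_of_nat: "Defs.monom 0 (of_nat k) = of_nat k"
  by (simp add: monom_def)
lemma monom_uminus: "Defs.monom m (- x) = - Defs.monom m x"
  by (simp add: monom_def single_uminus)

section \<open>Evaluation of monomials and substitution\<close>

definition evm :: "(nat \<Rightarrow> 'a::comm_semiring_1 mpoly) \<Rightarrow> (nat \<Rightarrow>\<^sub>0 nat) \<Rightarrow> 'a mpoly" where
  "evm g m = (\<Prod>i\<in>ks m. g i ^ lk m i)"

lemma evm_gen: "finite S \<Longrightarrow> ks m \<subseteq> S \<Longrightarrow> evm g m = (\<Prod>i\<in>S. g i ^ lk m i)"
  unfolding evm_def by (intro prod.mono_neutral_left) (auto simp: in_keys_iff)

lemma evm_add: "evm g (a + b) = evm g a * evm g b"
proof -
  let ?S = "ks a \<union> ks b"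
  have "evm g (a + b) = (\<Prod>i\<in>?S. g i ^ lk (a+b) i)"
    by (rule evm_gen) (auto simp: keys_add_nat)
  also have "\<dots> = (\<Prod>i\<in>?S. g i ^ lk a i) * (\<Prod>i\<in>?S. g i ^ lk b i)"
    by (simp add: lookup_add power_add prod.distrib)
  also have "\<dots> = evm g a * evm g b"
    using evm_gen[of ?S a g] evm_gen[of ?S b g] by simp
  finally show ?thesis .
qed

lemma evm_zero [simp]: "evm g 0 = 1" by (simp add: evm_def)

lemma evm_single: "evm g (sg i e) = g i ^ e"
  by (simp add: evm_def)

lemma subst_gen:
  "finite S \<Longrightarrow> ks p \<subseteq> S \<Longrightarrow> subst g p = (\<Sum>m\<in>S. Defs.monom 0 (lk p m) * evm g m)"
  unfolding subst_def evm_def[symmetric]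
  by (intro sum.mono_neutral_left) (auto simp: in_keys_iff)

lemma subst_add: "subst g (p + q) = subst g p + subst g q"
proof -
  let ?S = "ks p \<union> ks q"
  have "subst g (p + q) = (\<Sum>m\<in>?S. Defs.monom 0 (lk (p+q) m) * evm g m)"
    by (rule subst_gen) (use keys_add[of p q] in auto)
  also have "\<dots> = (\<Sum>m\<in>?S. Defs.monom 0 (lk p m) * evm g m) + (\<Sum>m\<in>?S. Defs.monom 0 (lk q m) * evm g m)"
    by (simp add: lookup_add monom_add distrib_right sum.distrib)
  also have "\<dots> = subst g p + subst g q"
    using subst_gen[of ?S p g] subst_gen[of ?S q g] by simp
  finally show ?thesis .
qed

lemma subst_zero [simp]: "subst g 0 = 0" by (simp add: subst_def)

lemma subst_monom: "subst g (Defs.monom m c) = Defs.monom 0 c * evm g m"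
  by (subst subst_gen[where S="{m}"]) (auto simp: monom_def lookup_single)

lemma subst_sum: "subst g (sum f S) = (\<Sum>x\<in>S. subst g (f x))"
  by (induction S rule: infinite_finite_induct) (auto simp: subst_add)

lemma mult_decomp:
  fixes p q :: "'a::comm_semiring_1 mpoly"
  shows "p * q = (\<Sum>a\<in>ks p. \<Sum>b\<in>ks q. Defs.monom (a + b) (lk p a * lk q b))"
proof -
  have "p * q = (\<Sum>a\<in>ks p. Defs.monom a (lk p a)) * (\<Sum>b\<in>ks q. Defs.monom b (lk q b))"
    by (metis pm_decomp monom_def[abs_def])
  also have "\<dots> = (\<Sum>a\<in>ks p. \<Sum>b\<in>ks q. Defs.monom (a + b) (lk p a * lk q b))"
    by (simp add: sum_product monom_mult)
  finally show ?thesis .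
qed

lemma subst_mult: "subst g (p * q) = subst g p * subst g q"
proof -
  have "subst g (p * q) = (\<Sum>a\<in>ks p. \<Sum>b\<in>ks q. subst g (Defs.monom (a + b) (lk p a * lk q b)))"
    by (subst mult_decomp) (simp add: subst_sum)
  also have "\<dots> = (\<Sum>a\<in>ks p. \<Sum>b\<in>ks q. (Defs.monom 0 (lk p a) * evm g a) * (Defs.monom 0 (lk q b) * evm g b))"
    by (simp add: subst_monom evm_add monom0_mult mult_ac)
  also have "\<dots> = subst g p * subst g q"
    by (simp add: subst_def evm_def sum_product)
  finally show ?thesis .
qed

lemma subst_const: "subst g (Defs.monom 0 c) = Defs.monom 0 c"
  by (simp add: subst_monom)

lemma subst_one [simp]: "subst g 1 = 1"
  using subst_const[of g 1] by simp

lemma subst_Var: "subst g (Var i) = g i"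
  by (simp add: Var_def subst_monom[unfolded monom_def] evm_single)

lemma subst_pow: "subst g (p ^ k) = subst g p ^ k"
  by (induction k) (auto simp: subst_mult)

lemma subst_prod: "subst g (prod f S) = (\<Prod>x\<in>S. subst g (f x))"
  by (induction S rule: infinite_finite_induct) (auto simp: subst_mult)

lemma subst_uminus: "subst g (- p :: 'a::comm_ring_1 mpoly) = - subst g p"
  using subst_add[of g p "-p"] by (simp add: eq_neg_iff_add_eq_0 add.commute)

lemma subst_diff: "subst g (p - q :: 'a::comm_ring_1 mpoly) = subst g p - subst g q"
  using subst_add[of g p "-q"] by (simp add: subst_uminus)

lemma subst_of_nat: "subst g (of_nat k) = of_nat k"
  using subst_const[of g "of_nat k"] by (simp add: monom0_of_nat)

lemma Var_pow: "Var i ^ e = Defs.monom (sg i e) 1"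
  by (induction e) (auto simp: Var_def monom_def mult_single single_add[symmetric])

lemma monom_as_prod: "Defs.monom m c = Defs.monom 0 c * evm Var m"
proof -
  have "evm Var m = (\<Prod>i\<in>ks m. sg (sg i (lk m i)) 1)"
    unfolding evm_def by (simp add: Var_pow monom_def)
  also have "\<dots> = sg (\<Sum>i\<in>ks m. sg i (lk m i)) 1"
    by (rule prod_single_one)
  also have "\<dots> = sg m 1" by (metis pm_decomp)
  finally have e: "evm Var m = sg m 1" .
  have "sg 0 c * sg m 1 = sg m c" by (simp add: mult_single)
  then show ?thesis by (simp add: monom_def e)
qed

lemma subst_Var_id: "subst Var p = p"
proof -
  have "subst Var p = (\<Sum>m\<in>ks p. Defs.monom m (lk p m))"
    unfolding subst_def evm_def[symmetric] by (simp add: monom_as_prod[symmetric])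
  also have "\<dots> = p" by (metis pm_decomp monom_def[abs_def])
  finally show ?thesis .
qed

lemma subst_evm: "subst h (evm g m) = evm (\<lambda>i. subst h (g i)) m"
  unfolding evm_def by (simp add: subst_prod subst_pow)

lemma subst_subst: "subst h (subst g p) = subst (\<lambda>i. subst h (g i)) p"
proof -
  have "subst h (subst g p) = (\<Sum>m\<in>ks p. subst h (Defs.monom 0 (lk p m) * evm g m))"
    unfolding subst_def[of g] evm_def[symmetric] by (rule subst_sum)
  also have "\<dots> = (\<Sum>m\<in>ks p. Defs.monom 0 (lk p m) * evm (\<lambda>i. subst h (g i)) m)"
    by (intro sum.cong refl) (simp only: subst_mult subst_const subst_evm)
  also have "\<dots> = subst (\<lambda>i. subst h (g i)) p"
    unfolding subst_def evm_def ..
  finally show ?thesis .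
qed

lemma polysI: "(\<And>m i. m \<in> ks p \<Longrightarrow> i \<in> ks m \<Longrightarrow> i < n) \<Longrightarrow> p \<in> polys n"
  by (auto simp: polys_def)
lemma polysD: "p \<in> polys n \<Longrightarrow> m \<in> ks p \<Longrightarrow> i \<in> ks m \<Longrightarrow> i < n"
  by (auto simp: polys_def)

lemma polys_zero [simp]: "0 \<in> polys n" by (auto simp: polys_def)
lemma polys_add: "p \<in> polys n \<Longrightarrow> q \<in> polys n \<Longrightarrow> p + q \<in> polys n"
  using keys_add[of p q] by (auto simp: polys_def)
lemma polys_mult: "p \<in> polys n \<Longrightarrow> q \<in> polys n \<Longrightarrow> p * q \<in> polys n"
  using keys_mult[of p q] by (fastforce simp: polys_def keys_add_nat)
lemma polys_monom: "ks m \<subseteq> {..<n} \<Longrightarrow> Defs.monom m c \<in> polys n"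
  by (auto simp: polys_def monom_def)
lemma polys_const: "Defs.monom 0 c \<in> polys n"
  by (auto simp: polys_def monom_def)
lemma polys_one [simp]: "(1::'a::comm_semiring_1 mpoly) \<in> polys n"
  by (auto simp: polys_def)
lemma polys_Var: "i < n \<Longrightarrow> Var i \<in> polys n"
  by (auto simp: polys_def Var_def)
lemma polys_uminus: "p \<in> polys n \<Longrightarrow> - (p :: 'a::comm_ring_1 mpoly) \<in> polys n"
  by (auto simp: polys_def)
lemma polys_diff: "p \<in> polys n \<Longrightarrow> q \<in> polys n \<Longrightarrow> (p - q :: 'a::comm_ring_1 mpoly) \<in> polys n"
  using polys_add[of p n "-q"] polys_uminus[of q n] by simp
lemma polys_sum: "(\<And>x. x \<in> S \<Longrightarrow> f x \<in> polys n) \<Longrightarrow> sum f S \<in> polys n"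
  by (induction S rule: infinite_finite_induct) (auto simp: polys_add)
lemma polys_prod: "(\<And>x. x \<in> S \<Longrightarrow> (f x :: 'a::comm_semiring_1 mpoly) \<in> polys n) \<Longrightarrow> prod f S \<in> polys n"
  by (induction S rule: infinite_finite_induct) (auto simp: polys_mult)
lemma polys_pow: "(p :: 'a::comm_semiring_1 mpoly) \<in> polys n \<Longrightarrow> p ^ k \<in> polys n"
  by (induction k) (auto simp: polys_mult)
lemma polys_of_nat: "(of_nat k :: 'a::comm_semiring_1 mpoly) \<in> polys n"
  by (metis monom0_of_nat polys_const)

lemma evm_cong: "ks m \<subseteq> {..<n} \<Longrightarrow> (\<And>i. i < n \<Longrightarrow> g i = h i) \<Longrightarrow> evm g m = evm h m"
  unfolding evm_def by (intro prod.cong) auto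

lemma subst_cong: "p \<in> polys n \<Longrightarrow> (\<And>i. i < n \<Longrightarrow> g i = h i) \<Longrightarrow> subst g p = subst h p"
  unfolding subst_def evm_def[symmetric]
  by (intro sum.cong refl arg_cong2[where f="(*)"] evm_cong[where n=n]) (auto simp: polys_def)

lemma evm_polys: "ks m \<subseteq> {..<n} \<Longrightarrow> (\<And>i. i < n \<Longrightarrow> g i \<in> polys n) \<Longrightarrow> evm g m \<in> polys n"
  unfolding evm_def by (intro polys_prod polys_pow) auto

lemma subst_polys: "p \<in> polys n \<Longrightarrow> (\<And>i. i < n \<Longrightarrow> g i \<in> polys n) \<Longrightarrow> subst g p \<in> polys n"
  unfolding subst_def evm_def[symmetric]
  by (intro polys_sum polys_mult polys_const evm_polys) (auto simp: polys_def)

lemma polys_induct [consumes 1, case_names const var add mult]: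
  assumes p: "p \<in> polys n"
    and const: "\<And>c. Q (Defs.monom 0 c)"
    and var: "\<And>i. i < n \<Longrightarrow> Q (Var i)"
    and add: "\<And>p q. Q p \<Longrightarrow> Q q \<Longrightarrow> Q (p + q)"
    and mult: "\<And>p q. Q p \<Longrightarrow> Q q \<Longrightarrow> Q (p * q)"
  shows "Q (p :: 'a::comm_semiring_1 mpoly)"
proof -
  have zero: "Q 0" using const[of 0] by simp
  have one: "Q 1" using const[of 1] by simp
  have sumQ: "\<And>f S. (\<And>x. x \<in> S \<Longrightarrow> Q (f x)) \<Longrightarrow> Q (sum f S)"
  proof -
    fix f S show "(\<And>x. x \<in> S \<Longrightarrow> Q (f x)) \<Longrightarrow> Q (sum f S)"
      by (induction S rule: infinite_finite_induct) (auto simp: zero add)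
  qed
  have prodQ: "\<And>f S. (\<And>x. x \<in> S \<Longrightarrow> Q (f x)) \<Longrightarrow> Q (prod f S)"
  proof -
    fix f :: "'b \<Rightarrow> 'a mpoly" and S show "(\<And>x. x \<in> S \<Longrightarrow> Q (f x)) \<Longrightarrow> Q (prod f S)"
      by (induction S rule: infinite_finite_induct) (auto simp: one mult)
  qed
  have powQ: "\<And>x k. Q x \<Longrightarrow> Q (x ^ k)"
  proof -
    fix x :: "'a mpoly" and k show "Q x \<Longrightarrow> Q (x ^ k)" by (induction k) (auto simp: one mult)
  qed
  have "p = subst Var p" by (simp add: subst_Var_id)
  also have "\<dots> = (\<Sum>m\<in>ks p. Defs.monom 0 (lk p m) * evm Var m)"
    unfolding subst_def evm_def ..
  finally have eq: "p = \<dots>" .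
  show ?thesis
    apply (subst eq)
    apply (rule sumQ)
    apply (rule mult[OF const])
    unfolding evm_def
    apply (rule prodQ)
    apply (rule powQ)
    apply (rule var)
    using p by (auto simp: polys_def)
qed

section \<open>Partial derivatives\<close>

abbreviation pd where "pd \<equiv> pderiv_var"

lemma pd_gen: "finite S \<Longrightarrow> ks p \<subseteq> S \<Longrightarrow>
  pd j p = (\<Sum>m\<in>S. Defs.monom (m - sg j 1) (of_nat (lk m j) * lk p m))"
  unfolding pderiv_var_def by (intro sum.mono_neutral_left) (auto simp: in_keys_iff)

lemma pd_add: "pd j (p + q) = pd j p + pd j q"
proof -
  let ?S = "ks p \<union> ks q"
  have "pd j (p + q) = (\<Sum>m\<in>?S. Defs.monom (m - sg j 1) (of_nat (lk m j) * lk (p+q) m))"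
    by (rule pd_gen) (use keys_add[of p q] in auto)
  also have "\<dots> = (\<Sum>m\<in>?S. Defs.monom (m - sg j 1) (of_nat (lk m j) * lk p m))
     + (\<Sum>m\<in>?S. Defs.monom (m - sg j 1) (of_nat (lk m j) * lk q m))"
    by (simp add: lookup_add monom_add distrib_left sum.distrib)
  also have "\<dots> = pd j p + pd j q"
    using pd_gen[of ?S p j] pd_gen[of ?S q j] by simp
  finally show ?thesis .
qed

lemma pd_zero [simp]: "pd j 0 = 0" by (simp add: pderiv_var_def)

lemma pd_monom: "pd j (Defs.monom m c) = Defs.monom (m - sg j 1) (of_nat (lk m j) * c)"
  by (subst pd_gen[where S="{m}"]) (auto simp: monom_def lookup_single)

lemma pd_sum: "pd j (sum f S) = (\<Sum>x\<in>S. pd j (f x))"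
  by (induction S rule: infinite_finite_induct) (auto simp: pd_add)

lemma pd_uminus: "pd j (- p :: 'a::comm_ring_1 mpoly) = - pd j p"
  using pd_add[of j p "-p"] by (simp add: eq_neg_iff_add_eq_0 add.commute)

lemma pd_diff: "pd j (p - q :: 'a::comm_ring_1 mpoly) = pd j p - pd j q"
  using pd_add[of j p "-q"] by (simp add: pd_uminus)

lemma minus_single_add: "1 \<le> lk a j \<Longrightarrow> a - sg j 1 + b = a + b - sg j (1::nat)"
  by (rule poly_mapping_eqI) (auto simp: lookup_add lookup_minus lookup_single when_def)

lemma pd_monom_mult:
  "pd j (Defs.monom (a + b) (x * y)) = pd j (Defs.monom a x) * Defs.monom b y + Defs.monom a x * pd j (Defs.monom b y)"
proof -
  have 1: "pd j (Defs.monom a x) * Defs.monom b y = Defs.monom (a + b - sg j 1) (of_nat (lk a j) * x * y)"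
  proof (cases "lk a j = 0")
    case True then show ?thesis by (simp add: pd_monom)
  next
    case False
    then have "b + (a - sg j 1) = a + b - sg j 1" using minus_single_add[of a j b] by (simp add: add.commute)
    then show ?thesis by (simp add: pd_monom monom_mult mult_ac)
  qed
  have 2: "Defs.monom a x * pd j (Defs.monom b y) = Defs.monom (a + b - sg j 1) (of_nat (lk b j) * x * y)"
  proof (cases "lk b j = 0")
    case True then show ?thesis by (simp add: pd_monom)
  next
    case False
    then have "a + (b - sg j 1) = a + b - sg j 1"
      using minus_single_add[of b j a] by (simp add: add.commute)
    then show ?thesis by (simp add: pd_monom monom_mult mult_ac)
  qed
  have 3: "of_nat (lk (a+b) j) * (x*y) = of_nat (lk a j) * x * y + of_nat (lk b j) * x * y"
    by (simp add: lookup_add algebra_simps)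
  show ?thesis unfolding 1 2 by (simp only: pd_monom 3 monom_add)
qed

lemma pd_mult: "pd j (p * q) = pd j p * q + p * pd j q"
proof -
  let ?P = "\<lambda>a. Defs.monom a (lk p a)" and ?Q = "\<lambda>b. Defs.monom b (lk q b)"
  have "pd j (p * q) = (\<Sum>a\<in>ks p. \<Sum>b\<in>ks q. pd j (?P a) * ?Q b + ?P a * pd j (?Q b))"
    by (subst mult_decomp) (simp only: pd_sum pd_monom_mult)
  also have "\<dots> = (\<Sum>a\<in>ks p. \<Sum>b\<in>ks q. pd j (?P a) * ?Q b) + (\<Sum>a\<in>ks p. \<Sum>b\<in>ks q. ?P a * pd j (?Q b))"
    by (simp only: sum.distrib)
  also have "\<dots> = pd j (sum ?P (ks p)) * sum ?Q (ks q) + sum ?P (ks p) * pd j (sum ?Q (ks q))"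
    by (simp only: sum_product pd_sum)
  also have "\<dots> = pd j p * q + p * pd j q"
    by (simp only: monom_def pm_decomp[symmetric])
  finally show ?thesis .
qed

lemma pd_const: "pd j (Defs.monom 0 c) = 0"
  by (simp add: pd_monom)

lemma pd_one [simp]: "pd j 1 = 0"
  using pd_const[of j 1] by simp

lemma pd_of_nat: "pd j (of_nat k) = 0"
  using pd_const[of j "of_nat k"] by (simp add: monom0_of_nat)

lemma pd_Var: "pd j (Var i) = (if i = j then 1 else 0)"
  by (auto simp: Var_def monom_def[symmetric] pd_monom lookup_single when_def)

lemma pd_pow: "pd j (p ^ Suc k) = of_nat (Suc k) * p ^ k * pd j p"
  by (induction k) (auto simp: pd_mult algebra_simps)

lemma pd_prod_const_left: "pd j (Defs.monom 0 c * p) = Defs.monom 0 c * pd j p"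
  by (simp add: pd_mult pd_const)

lemma pd_polys: "p \<in> polys n \<Longrightarrow> pd j p \<in> polys n"
  unfolding pderiv_var_def
  by (intro polys_sum polys_monom) (auto simp: polys_def lookup_minus in_keys_iff)

lemma chain_rule:
  fixes g :: "nat \<Rightarrow> 'a::comm_semiring_1 mpoly"
  assumes "p \<in> polys n"
  shows "pd j (subst g p) = (\<Sum>i<n. subst g (pd i p) * pd j (g i))"
  using assms
proof (induction p rule: polys_induct)
  case (const c) then show ?case by (simp add: subst_const pd_const)
next
  case (var l)
  have "(\<Sum>i<n. subst g (pd i (Var l)) * pd j (g i)) = (\<Sum>i\<in>{l}. subst g (pd i (Var l)) * pd j (g i))"
    by (intro sum.mono_neutral_right) (use var in \<open>auto simp: pd_Var\<close>)
  then show ?case by (simp add: subst_Var pd_Var)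
next
  case (add p q) then show ?case by (simp add: subst_add pd_add sum.distrib distrib_right)
next
  case (mult p q)
  have "pd j (subst g (p * q)) = pd j (subst g p) * subst g q + subst g p * pd j (subst g q)"
    by (simp add: subst_mult pd_mult)
  also have "\<dots> = (\<Sum>i<n. subst g (pd i p) * pd j (g i) * subst g q + subst g p * (subst g (pd i q) * pd j (g i)))"
    unfolding mult.IH sum_distrib_left sum_distrib_right sum.distrib ..
  also have "\<dots> = (\<Sum>i<n. subst g (pd i (p * q)) * pd j (g i))"
    by (intro sum.cong refl) (simp add: pd_mult subst_add subst_mult algebra_simps)
  finally show ?case .
qed

section \<open>Weighted degrees\<close>

definition deg_le :: "(nat \<Rightarrow> nat) \<Rightarrow> 'a::zero mpoly \<Rightarrow> int \<Rightarrow> bool" where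
  "deg_le w p B \<longleftrightarrow> (\<forall>m\<in>ks p. int (mon_wdeg w m) \<le> B)"

definition hp :: "(nat \<Rightarrow> nat) \<Rightarrow> int \<Rightarrow> 'a::comm_monoid_add mpoly \<Rightarrow> 'a mpoly" where
  "hp w e p = (\<Sum>m\<in>{m \<in> ks p. int (mon_wdeg w m) = e}. Defs.monom m (lk p m))"

definition ishom :: "(nat \<Rightarrow> nat) \<Rightarrow> int \<Rightarrow> 'a::zero mpoly \<Rightarrow> bool" where
  "ishom w e p \<longleftrightarrow> (\<forall>m\<in>ks p. int (mon_wdeg w m) = e)"

definition tb :: "(nat \<Rightarrow> nat) \<Rightarrow> 'a::comm_monoid_add mpoly \<Rightarrow> int \<Rightarrow> 'a mpoly \<Rightarrow> bool" where
  "tb w p a h \<longleftrightarrow> deg_le w p a \<and> hp w a p = h"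

lemma mon_wdeg_gen: "finite S \<Longrightarrow> ks m \<subseteq> S \<Longrightarrow> mon_wdeg w m = (\<Sum>i\<in>S. w i * lk m i)"
  unfolding mon_wdeg_def by (intro sum.mono_neutral_left) (auto simp: in_keys_iff)

lemma mon_wdeg_add: "mon_wdeg w (a + b) = mon_wdeg w a + mon_wdeg w b"
proof -
  let ?S = "ks a \<union> ks b"
  have "mon_wdeg w (a + b) = (\<Sum>i\<in>?S. w i * lk (a+b) i)"
    by (rule mon_wdeg_gen) (auto simp: keys_add_nat)
  also have "\<dots> = (\<Sum>i\<in>?S. w i * lk a i) + (\<Sum>i\<in>?S. w i * lk b i)"
    by (simp add: lookup_add distrib_left sum.distrib)
  also have "\<dots> = mon_wdeg w a + mon_wdeg w b"
    using mon_wdeg_gen[of ?S a w] mon_wdeg_gen[of ?S b w] by simp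
  finally show ?thesis .
qed

lemma mon_wdeg_zero [simp]: "mon_wdeg w 0 = 0" by (simp add: mon_wdeg_def)
lemma mon_wdeg_single: "mon_wdeg w (sg i e) = w i * e" by (simp add: mon_wdeg_def)

lemma mon_wdeg_minus: "1 \<le> lk m j \<Longrightarrow> mon_wdeg w (m - sg j 1) = mon_wdeg w m - w j"
proof -
  assume a: "1 \<le> lk m j"
  have "m = (m - sg j 1) + sg j 1"
    by (rule poly_mapping_eqI) (use a in \<open>auto simp: lookup_add lookup_minus lookup_single when_def\<close>)
  then have "mon_wdeg w m = mon_wdeg w (m - sg j 1) + w j"
    by (metis mon_wdeg_add mon_wdeg_single mult_1_right)
  then show ?thesis by simp
qed

lemma lookup_hp: "lk (hp w e p) m = (if int (mon_wdeg w m) = e then lk p m else 0)"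
proof -
  have "lk (hp w e p) m = (\<Sum>m'\<in>{m' \<in> ks p. int (mon_wdeg w m') = e}. (lk p m' when m' = m))"
    by (simp add: hp_def lookup_sum monom_def lookup_single)
  also have "\<dots> = (if int (mon_wdeg w m) = e then lk p m else 0)"
  proof (cases "m \<in> ks p \<and> int (mon_wdeg w m) = e")
    case True
    then have "(\<Sum>m'\<in>{m' \<in> ks p. int (mon_wdeg w m') = e}. (lk p m' when m' = m)) = (\<Sum>m'\<in>{m}. (lk p m' when m' = m))"
      by (intro sum.mono_neutral_right) (auto simp: when_def)
    then show ?thesis using True by simp
  next
    case False
    have "(\<Sum>m'\<in>{m' \<in> ks p. int (mon_wdeg w m') = e}. (lk p m' when m' = m)) = 0"
      using False by (intro sum.neutral) (auto simp: when_def)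
    then show ?thesis using False by (auto simp: in_keys_iff)
  qed
  finally show ?thesis .
qed

lemma keys_hp: "ks (hp w e p) = {m \<in> ks p. int (mon_wdeg w m) = e}"
  by (auto simp: in_keys_iff lookup_hp split: if_splits)

lemma top_comp_hp: "top_comp w p = hp w (wdeg w p) p"
  by (simp add: top_comp_def hp_def)

lemma hp_add: "hp w e (p + q) = hp w e p + hp w e q"
  by (rule poly_mapping_eqI) (simp add: lookup_hp lookup_add)

lemma hp_zero [simp]: "hp w e 0 = 0"
  by (simp add: hp_def)

lemma hp_diff: "hp w e (p - q :: 'a::comm_ring_1 mpoly) = hp w e p - hp w e q"
  by (rule poly_mapping_eqI) (simp add: lookup_hp lookup_minus)

lemma hp_sum: "hp w e (sum f S) = (\<Sum>x\<in>S. hp w e (f x))"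
  by (induction S rule: infinite_finite_induct) (auto simp: hp_add)

lemma hp_ishom: "ishom w e p \<Longrightarrow> hp w e p = p"
  by (rule poly_mapping_eqI) (auto simp: lookup_hp ishom_def in_keys_iff)

lemma hp_low: "deg_le w p (e - 1) \<Longrightarrow> hp w e p = 0"
  by (rule poly_mapping_eqI) (force simp: lookup_hp deg_le_def in_keys_iff)

lemma ishom_hp: "ishom w e (hp w e p)"
  by (simp add: ishom_def keys_hp)

lemma ishom_deg_le: "ishom w e p \<Longrightarrow> deg_le w p e"
  by (simp add: ishom_def deg_le_def)

lemma deg_le_rest: "deg_le w p e \<Longrightarrow> deg_le w (p - hp w e p :: 'a::comm_ring_1 mpoly) (e - 1)"
  by (force simp: deg_le_def in_keys_iff lookup_minus lookup_hp split: if_splits)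

lemma deg_le_zero [simp]: "deg_le w 0 B" by (simp add: deg_le_def)
lemma deg_le_mono: "deg_le w p A \<Longrightarrow> A \<le> B \<Longrightarrow> deg_le w p B"
  by (auto simp: deg_le_def)
lemma deg_le_add: "deg_le w p B \<Longrightarrow> deg_le w q B \<Longrightarrow> deg_le w (p + q) B"
  using keys_add[of p q] by (auto simp: deg_le_def)
lemma deg_le_uminus: "deg_le w (- p :: 'a::comm_ring_1 mpoly) B = deg_le w p B"
  by (simp add: deg_le_def)
lemma deg_le_diff: "deg_le w p B \<Longrightarrow> deg_le w q B \<Longrightarrow> deg_le w (p - q :: 'a::comm_ring_1 mpoly) B"
  using deg_le_add[of w p B "-q"] by (simp add: deg_le_uminus)
lemma deg_le_mult: "deg_le w p A \<Longrightarrow> deg_le w q B \<Longrightarrow> deg_le w (p * q) (A + B)"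
  using keys_mult[of p q] by (fastforce simp: deg_le_def mon_wdeg_add)
lemma deg_le_const: "deg_le w (Defs.monom 0 c) 0"
  by (simp add: deg_le_def monom_def)
lemma deg_le_one: "deg_le w (1::'a::comm_semiring_1 mpoly) 0"
  by (simp add: deg_le_def)
lemma deg_le_sum: "(\<And>x. x \<in> S \<Longrightarrow> deg_le w (f x) B) \<Longrightarrow> deg_le w (sum f S) B"
  by (induction S rule: infinite_finite_induct) (auto simp: deg_le_add)
lemma deg_le_prod: "(\<And>x. x \<in> S \<Longrightarrow> deg_le w (f x :: 'a::comm_semiring_1 mpoly) (B x)) \<Longrightarrow> deg_le w (prod f S) (sum B S)"
  by (induction S rule: infinite_finite_induct) (auto simp: deg_le_one intro!: deg_le_mult)
lemma deg_le_pow: "deg_le w (p :: 'a::comm_semiring_1 mpoly) B \<Longrightarrow> deg_le w (p ^ k) (int k * B)"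
  by (induction k) (auto simp: deg_le_one algebra_simps dest: deg_le_mult)
lemma deg_le_Var: "deg_le w (Var i) (int (w i))"
  by (simp add: deg_le_def Var_def mon_wdeg_single)
lemma deg_le_of_nat: "deg_le w (of_nat k :: 'a::comm_semiring_1 mpoly) 0"
  by (metis deg_le_const monom0_of_nat)

lemma ishom_mult: "ishom w a p \<Longrightarrow> ishom w b q \<Longrightarrow> ishom w (a + b) (p * q)"
  using keys_mult[of p q] by (fastforce simp: ishom_def mon_wdeg_add)

lemma ishom_zero [simp]: "ishom w e 0" by (simp add: ishom_def)

lemma hp_mult:
  fixes p q :: "'a::comm_ring_1 mpoly"
  assumes "deg_le w p a" "deg_le w q b"
  shows "hp w (a + b) (p * q) = hp w a p * hp w b q"
proof -
  define h where "h = hp w a p"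
  define h' where "h' = hp w b q"
  define r where "r = p - h"
  define r' where "r' = q - h'"
  have pq: "p * q = h * h' + (r * q + h * r')"
    by (simp add: r_def r'_def algebra_simps)
  have hr: "deg_le w r (a - 1)" unfolding r_def h_def by (rule deg_le_rest[OF assms(1)])
  have hr': "deg_le w r' (b - 1)" unfolding r'_def h'_def by (rule deg_le_rest[OF assms(2)])
  have 1: "hp w (a + b) (h * h') = h * h'"
    unfolding h_def h'_def by (intro hp_ishom ishom_mult ishom_hp)
  have "deg_le w (r * q) (a - 1 + b)" using deg_le_mult[OF hr assms(2)] .
  then have 2: "hp w (a + b) (r * q) = 0" by (intro hp_low) (simp add: algebra_simps)
  have "deg_le w (h * r') (a + (b - 1))"
    by (rule deg_le_mult[OF _ hr']) (simp add: h_def ishom_deg_le ishom_hp)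
  then have 3: "hp w (a + b) (h * r') = 0" by (intro hp_low) (simp add: algebra_simps)
  have "hp w (a + b) (p * q) = h * h'" unfolding pq hp_add 1 2 3 by simp
  then show ?thesis by (simp add: h_def h'_def)
qed

lemma tb_mult: "tb w p a h \<Longrightarrow> tb w q b h' \<Longrightarrow> tb w (p * q :: 'a::comm_ring_1 mpoly) (a + b) (h * h')"
  unfolding tb_def using hp_mult deg_le_mult by blast

lemma tb_add: "tb w p a h \<Longrightarrow> tb w q a h' \<Longrightarrow> tb w (p + q) a (h + h')"
  unfolding tb_def using hp_add deg_le_add by blast

lemma tb_zero: "tb w 0 a 0" by (simp add: tb_def)

lemma tb_sum: "(\<And>x. x \<in> S \<Longrightarrow> tb w (f x) a (h x)) \<Longrightarrow> tb w (sum f S) a (sum h S)"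
  by (induction S rule: infinite_finite_induct) (auto simp: tb_zero tb_add)

lemma tb_one: "tb w (1::'a::comm_ring_1 mpoly) 0 1"
  unfolding tb_def by (auto simp: deg_le_one hp_ishom ishom_def)

lemma ishom_const: "ishom w 0 (Defs.monom 0 c)"
  by (simp add: ishom_def monom_def)

lemma tb_const: "tb w (Defs.monom 0 c) 0 (Defs.monom 0 c)"
  unfolding tb_def by (simp add: deg_le_const hp_ishom ishom_const)

lemma tb_prod: "(\<And>x. x \<in> S \<Longrightarrow> tb w (f x :: 'a::comm_ring_1 mpoly) (a x) (h x)) \<Longrightarrow> tb w (prod f S) (sum a S) (prod h S)"
  by (induction S rule: infinite_finite_induct) (auto simp: tb_one intro!: tb_mult)

lemma tb_pow: "tb w (p :: 'a::comm_ring_1 mpoly) a h \<Longrightarrow> tb w (p ^ k) (int k * a) (h ^ k)"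
  by (induction k) (auto simp: tb_one algebra_simps dest: tb_mult)

lemma tb_mono: "tb w p a h \<Longrightarrow> a < b \<Longrightarrow> tb w p b 0"
proof -
  assume "tb w p a h" "a < b"
  then have d: "deg_le w p a" by (simp add: tb_def)
  then have "deg_le w p b" "deg_le w p (b - 1)" using \<open>a < b\<close> by (auto intro: deg_le_mono)
  then show ?thesis by (simp add: tb_def hp_low)
qed

lemma wdeg_nonneg: "wdeg w p \<ge> 0" by (simp add: wdeg_def)

lemma deg_le_wdeg: "deg_le w p (wdeg w p)"
proof -
  have "finite (mon_wdeg w ` ks p)" by simp
  then show ?thesis unfolding deg_le_def wdeg_def by auto
qed

lemma wdeg_le: "deg_le w p B \<Longrightarrow> 0 \<le> B \<Longrightarrow> wdeg w p \<le> B"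
proof -
  assume d: "deg_le w p B" and B: "0 \<le> B"
  have "\<forall>x\<in>insert 0 (mon_wdeg w ` ks p). int x \<le> B" using d B by (auto simp: deg_le_def)
  moreover have "Max (insert 0 (mon_wdeg w ` ks p)) \<in> insert 0 (mon_wdeg w ` ks p)"
    by (rule Max_in) auto
  ultimately show ?thesis unfolding wdeg_def by blast
qed

lemma wdeg_le_nz: "deg_le w p B \<Longrightarrow> p \<noteq> 0 \<Longrightarrow> wdeg w p \<le> B"
proof -
  assume d: "deg_le w p B" and p: "p \<noteq> 0"
  then obtain m where "m \<in> ks p" by (metis all_not_in_conv keys_eq_empty)
  then have "0 \<le> B" using d by (force simp: deg_le_def)
  then show ?thesis using wdeg_le d by blast
qed

lemma wdeg_ge: "m \<in> ks p \<Longrightarrow> int (mon_wdeg w m) \<le> wdeg w p"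
  unfolding wdeg_def by simp

lemma wdeg_eq: "deg_le w p e \<Longrightarrow> hp w e p \<noteq> 0 \<Longrightarrow> wdeg w p = e"
proof -
  assume d: "deg_le w p e" and h: "hp w e p \<noteq> 0"
  then obtain m where m: "m \<in> ks (hp w e p)" by (metis all_not_in_conv keys_eq_empty)
  then have "m \<in> ks p" "int (mon_wdeg w m) = e" by (auto simp: keys_hp)
  then have "e \<le> wdeg w p" using wdeg_ge by metis
  moreover have "wdeg w p \<le> e" using wdeg_le_nz[OF d] h hp_zero by metis
  ultimately show ?thesis by simp
qed

lemma top_comp_nz: "p \<noteq> 0 \<Longrightarrow> top_comp w p \<noteq> 0"
proof -
  assume p: "p \<noteq> 0"
  then have ne: "ks p \<noteq> {}" by simp
  have "Max (insert 0 (mon_wdeg w ` ks p)) \<in> mon_wdeg w ` ks p"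
  proof -
    have "Max (mon_wdeg w ` ks p) \<in> mon_wdeg w ` ks p" by (rule Max_in) (use ne in auto)
    moreover have "Max (insert 0 (mon_wdeg w ` ks p)) = max 0 (Max (mon_wdeg w ` ks p))"
      by (rule Max_insert) (use ne in auto)
    ultimately show ?thesis by simp
  qed
  then obtain m where m: "m \<in> ks p" "int (mon_wdeg w m) = wdeg w p" by (auto simp: wdeg_def)
  then have "m \<in> ks (top_comp w p)" by (simp add: top_comp_hp keys_hp)
  then show ?thesis by auto
qed

lemma tb_top: "tb w p (wdeg w p) (top_comp w p)"
  by (simp add: tb_def deg_le_wdeg top_comp_hp)

lemma tb_wdeg: "tb w p a h \<Longrightarrow> h \<noteq> 0 \<Longrightarrow> wdeg w p = a \<and> top_comp w p = h"
  unfolding tb_def using wdeg_eq top_comp_hp by metis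

lemma wdeg_mult:
  fixes p q :: "'a::idom mpoly"
  assumes "p \<noteq> 0" "q \<noteq> 0"
  shows "wdeg w (p * q) = wdeg w p + wdeg w q \<and> top_comp w (p * q) = top_comp w p * top_comp w q"
proof -
  have "tb w (p * q) (wdeg w p + wdeg w q) (top_comp w p * top_comp w q)"
    by (intro tb_mult tb_top)
  moreover have "top_comp w p * top_comp w q \<noteq> 0" using assms top_comp_nz by auto
  ultimately show ?thesis by (rule tb_wdeg)
qed

lemma tb_le: "tb w p a h \<Longrightarrow> p \<noteq> 0 \<Longrightarrow> wdeg w p \<le> a"
  unfolding tb_def by (auto intro: wdeg_le_nz)

lemma mon_wdeg_minus': "1 \<le> lk m j \<Longrightarrow> mon_wdeg w m = mon_wdeg w (m - sg j 1) + w j"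
proof -
  assume a: "1 \<le> lk m j"
  have "m = (m - sg j 1) + sg j 1"
    by (rule poly_mapping_eqI) (use a in \<open>auto simp: lookup_add lookup_minus lookup_single when_def\<close>)
  then show ?thesis
    by (metis mon_wdeg_add mon_wdeg_single mult_1_right)
qed

lemma keys_pd: "m' \<in> ks (pd j p) \<Longrightarrow> \<exists>m\<in>ks p. 1 \<le> lk m j \<and> m' = m - sg j 1"
proof -
  assume "m' \<in> ks (pd j p)"
  moreover have "ks (pd j p) \<subseteq> (\<Union>m\<in>ks p. ks (Defs.monom (m - sg j 1) (of_nat (lk m j) * lk p m) :: 'a mpoly))"
    unfolding pderiv_var_def by (rule keys_sum)
  ultimately obtain m where m: "m \<in> ks p" "m' \<in> ks (Defs.monom (m - sg j 1) (of_nat (lk m j) * lk p m) :: 'a mpoly)"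
    by blast
  have "(of_nat (lk m j) * lk p m :: 'a) \<noteq> 0 \<and> m' = m - sg j 1"
  proof (cases "(of_nat (lk m j) * lk p m :: 'a) = 0")
    case True then show ?thesis using m(2) by (simp add: monom_def)
  next
    case False then show ?thesis using m(2) by (simp add: monom_def)
  qed
  then have "(of_nat (lk m j) * lk p m :: 'a) \<noteq> 0" "m' = m - sg j 1" by auto
  then have "lk m j \<noteq> 0" by (metis mult_zero_left of_nat_0)
  then have "1 \<le> lk m j" by simp
  then show ?thesis using m(1) \<open>m' = _\<close> by blast
qed

lemma deg_le_pd: "deg_le w p B \<Longrightarrow> deg_le w (pd j p) (B - int (w j))"
  unfolding deg_le_def
proof
  fix m' assume d: "\<forall>m\<in>ks p. int (mon_wdeg w m) \<le> B" and "m' \<in> ks (pd j p)"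
  then obtain m where m: "m \<in> ks p" "1 \<le> lk m j" "m' = m - sg j 1" using keys_pd by blast
  then show "int (mon_wdeg w m') \<le> B - int (w j)" using d mon_wdeg_minus'[OF m(2), of w] by auto
qed

lemma ishom_pd: "ishom w e p \<Longrightarrow> ishom w (e - int (w j)) (pd j p)"
  unfolding ishom_def
proof
  fix m' assume d: "\<forall>m\<in>ks p. int (mon_wdeg w m) = e" and "m' \<in> ks (pd j p)"
  then obtain m where m: "m \<in> ks p" "1 \<le> lk m j" "m' = m - sg j 1" using keys_pd by blast
  then show "int (mon_wdeg w m') = e - int (w j)" using d mon_wdeg_minus'[OF m(2), of w] by auto
qed

lemma tb_pd: "tb w p a h \<Longrightarrow> tb w (pd j p :: 'a::comm_ring_1 mpoly) (a - int (w j)) (pd j h)"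
proof -
  assume "tb w p a h"
  then have d: "deg_le w p a" and h: "h = hp w a p" by (auto simp: tb_def)
  define r where "r = p - h"
  have r: "deg_le w r (a - 1)" unfolding r_def h by (rule deg_le_rest[OF d])
  have p: "pd j p = pd j h + pd j r" by (simp add: r_def pd_diff)
  have 1: "hp w (a - int (w j)) (pd j h) = pd j h"
    by (rule hp_ishom) (metis ishom_pd ishom_hp h)
  have "deg_le w (pd j r) (a - 1 - int (w j))" by (rule deg_le_pd[OF r])
  then have 2: "hp w (a - int (w j)) (pd j r) = 0" by (intro hp_low) (simp add: algebra_simps)
  have "deg_le w (pd j p) (a - int (w j))" by (rule deg_le_pd[OF d])
  moreover have "hp w (a - int (w j)) (pd j p) = pd j h" unfolding p hp_add 1 2 by simp
  ultimately show ?thesis by (simp add: tb_def)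
qed

lemma tb_pdk: "tb w p a h \<Longrightarrow> tb w ((pd j ^^ k) p :: 'a::comm_ring_1 mpoly) (a - int k * int (w j)) ((pd j ^^ k) h)"
proof (induction k)
  case 0 then show ?case by simp
next
  case (Suc k)
  then have "tb w (pd j ((pd j ^^ k) p)) (a - int k * int (w j) - int (w j)) (pd j ((pd j ^^ k) h))"
    by (intro tb_pd) simp
  then show ?case by (simp add: algebra_simps)
qed

lemma pdk_polys: "p \<in> polys n \<Longrightarrow> (pd j ^^ k) p \<in> polys n"
  by (induction k) (auto simp: pd_polys)

definition ew :: "nat \<Rightarrow> nat \<Rightarrow> nat" where "ew j = (\<lambda>i. if i = j then 1 else 0)"

lemma vdeg_pd: "pd j p \<noteq> 0 \<Longrightarrow> wdeg (ew j) (pd j p) < wdeg (ew j) p"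
proof -
  assume "pd j p \<noteq> 0"
  moreover have "deg_le (ew j) (pd j p) (wdeg (ew j) p - 1)"
    using deg_le_pd[OF deg_le_wdeg[of "ew j" p], of j] by (simp add: ew_def)
  ultimately show ?thesis using wdeg_le_nz by fastforce
qed

section \<open>Degree of substitution\<close>

abbreviation W1 :: "nat \<Rightarrow> nat" where "W1 \<equiv> \<lambda>_. 1"

lemma tb_evm:
  assumes "\<And>i. tb w (f i) (int (d i)) (h i)"
  shows "tb w (evm f m :: 'a::comm_ring_1 mpoly) (int (mon_wdeg d m)) (evm h m)"
proof -
  have "tb w (evm f m) (\<Sum>i\<in>ks m. int (lk m i) * int (d i)) (evm h m)"
    unfolding evm_def by (intro tb_prod tb_pow assms)
  moreover have "(\<Sum>i\<in>ks m. int (lk m i) * int (d i)) = int (mon_wdeg d m)"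
    by (simp add: mon_wdeg_def mult.commute)
  ultimately show ?thesis by simp
qed

lemma tb_subst:
  assumes "\<And>i. tb w (f i) (int (d i)) (h i)"
  shows "tb w (subst f Q :: 'a::comm_ring_1 mpoly) (wdeg d Q) (subst h (top_comp d Q))"
proof -
  let ?h = "\<lambda>m. if int (mon_wdeg d m) = wdeg d Q then Defs.monom 0 (lk Q m) * evm h m else 0"
  have "tb w (subst f Q) (wdeg d Q) (\<Sum>m\<in>ks Q. ?h m)"
    unfolding subst_def evm_def[symmetric]
  proof (rule tb_sum)
    fix m assume m: "m \<in> ks Q"
    have t: "tb w (Defs.monom 0 (lk Q m) * evm f m) (0 + int (mon_wdeg d m)) (Defs.monom 0 (lk Q m) * evm h m)"
      by (intro tb_mult tb_const tb_evm assms)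
    show "tb w (Defs.monom 0 (lk Q m) * evm f m) (wdeg d Q) (?h m)"
    proof (cases "int (mon_wdeg d m) = wdeg d Q")
      case True then show ?thesis using t by simp
    next
      case False
      then have "int (mon_wdeg d m) < wdeg d Q" using wdeg_ge[OF m, of d] by simp
      then show ?thesis using tb_mono[OF t] False by simp
    qed
  qed
  moreover have "(\<Sum>m\<in>ks Q. ?h m) = subst h (top_comp d Q)"
    unfolding top_comp_def subst_sum subst_monom
    by (simp add: sum.inter_filter[symmetric])
  ultimately show ?thesis by simp
qed

lemma of_int_monom: "(of_int z :: 'a::comm_ring_1 mpoly) = Defs.monom 0 (of_int z)"
proof (cases z rule: int_cases)
  case (nonneg n) then show ?thesis by (simp add: monom0_of_nat)
next
  case (neg n)
  then have "(of_int z :: 'a mpoly) = - of_nat (Suc n)" by (simp only: of_int_minus of_int_of_nat_eq)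
  also have "\<dots> = - Defs.monom 0 (of_nat (Suc n))" by (simp only: monom0_of_nat)
  also have "\<dots> = Defs.monom 0 (- of_nat (Suc n))" by (simp only: monom_uminus)
  also have "\<dots> = Defs.monom 0 (of_int z)" using neg by (simp only: of_int_minus of_int_of_nat_eq)
  finally show ?thesis .
qed

lemma deg_le_of_int: "deg_le w (of_int z :: 'a::comm_ring_1 mpoly) 0"
  by (metis deg_le_const of_int_monom)

lemma deg_le_det:
  fixes A :: "'a::comm_ring_1 mpoly mat"
  assumes A: "A \<in> carrier_mat m m"
    and e: "\<And>i j. i < m \<Longrightarrow> j < m \<Longrightarrow> deg_le w (A $$ (i, j)) (e i)"
  shows "deg_le w (det A) (\<Sum>i<m. e i)"
proof -
  have "det A = (\<Sum>p\<in>{p. p permutes {0..<m}}. signof p * (\<Prod>i = 0..<m. A $$ (i, p i)))"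
    by (rule det_def'[OF A])
  moreover have "deg_le w (\<Sum>p\<in>{p. p permutes {0..<m}}. signof p * (\<Prod>i = 0..<m. A $$ (i, p i))) (0 + (\<Sum>i=0..<m. e i))"
  proof (rule deg_le_sum)
    fix p assume "p \<in> {p. p permutes {0..<m}}"
    then have p: "\<And>i. i < m \<Longrightarrow> p i < m" by (auto simp: permutes_in_image)
    show "deg_le w (signof p * (\<Prod>i = 0..<m. A $$ (i, p i))) (0 + (\<Sum>i=0..<m. e i))"
      by (intro deg_le_mult deg_le_of_int deg_le_prod e) (auto simp: p)
  qed
  ultimately show ?thesis by (simp add: atLeast0LessThan)
qed

locale aut_setup =
  fixes n :: nat and f g :: "nat \<Rightarrow> 'a::field mpoly"
  assumes n: "n \<ge> 1"
    and fP: "\<And>i. i < n \<Longrightarrow> f i \<in> polys n"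
    and gP: "\<And>i. i < n \<Longrightarrow> g i \<in> polys n"
    and gf: "\<And>i. i < n \<Longrightarrow> subst g (f i) = Var i"
    and fg: "\<And>i. i < n \<Longrightarrow> subst f (g i) = Var i"
begin

lemma fg_id: "X \<in> polys n \<Longrightarrow> subst f (subst g X) = X"
proof -
  assume X: "X \<in> polys n"
  have "subst f (subst g X) = subst (\<lambda>i. subst f (g i)) X" by (rule subst_subst)
  also have "\<dots> = subst Var X" by (rule subst_cong[OF X]) (simp add: fg)
  finally show ?thesis by (simp add: subst_Var_id)
qed

lemma gf_id: "X \<in> polys n \<Longrightarrow> subst g (subst f X) = X"
proof -
  assume X: "X \<in> polys n"
  have "subst g (subst f X) = subst (\<lambda>i. subst g (f i)) X" by (rule subst_subst)
  also have "\<dots> = subst Var X" by (rule subst_cong[OF X]) (simp add: gf)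
  finally show ?thesis by (simp add: subst_Var_id)
qed

lemma subst_f_polys: "X \<in> polys n \<Longrightarrow> subst f X \<in> polys n"
  by (rule subst_polys) (auto simp: fP)

lemma subst_f_nz: "X \<in> polys n \<Longrightarrow> X \<noteq> 0 \<Longrightarrow> subst f X \<noteq> 0"
  using gf_id by fastforce

definition J :: "'a mpoly mat" where "J = mat n n (\<lambda>(j, l). pd l (f j))"
definition N :: "'a mpoly mat" where "N = mat n n (\<lambda>(i, j). subst f (pd j (g i)))"

lemma J_carrier: "J \<in> carrier_mat n n" by (simp add: J_def)
lemma N_carrier: "N \<in> carrier_mat n n" by (simp add: N_def)

lemma NJ: "N * J = 1\<^sub>m n"
proof (rule eq_matI)
  fix i l assume il: "i < dim_row (1\<^sub>m n :: 'a mpoly mat)" "l < dim_col (1\<^sub>m n :: 'a mpoly mat)"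
  then have i: "i < n" and l: "l < n" by auto
  have "(N * J) $$ (i, l) = (\<Sum>j<n. subst f (pd j (g i)) * pd l (f j))"
    using i l by (simp add: N_def J_def scalar_prod_def atLeast0LessThan)
  also have "\<dots> = pd l (subst f (g i))"
    by (simp add: chain_rule[OF gP[OF i]])
  also have "\<dots> = (1\<^sub>m n) $$ (i, l)"
    using i l by (simp add: fg pd_Var)
  finally show "(N * J) $$ (i, l) = (1\<^sub>m n) $$ (i, l)" .
qed (auto simp: N_def J_def)

lemma detJ_unit: "det J * det N = 1"
proof -
  have "det N * det J = det (N * J)" by (rule det_mult[OF N_carrier J_carrier, symmetric])
  then show ?thesis by (simp add: NJ mult.commute)
qed

lemma detJ_deg: "det J \<noteq> 0 \<and> wdeg W1 (det J) = 0"
proof -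
  have nz: "det J \<noteq> 0" "det N \<noteq> 0" using detJ_unit by auto
  have "wdeg W1 (det J * det N) = wdeg W1 (det J) + wdeg W1 (det N)"
    using wdeg_mult[OF nz] by simp
  moreover have "wdeg W1 (1 :: 'a mpoly) = 0" by (simp add: wdeg_def)
  ultimately have "wdeg W1 (det J) + wdeg W1 (det N) = 0" using detJ_unit by simp
  then show ?thesis using nz wdeg_nonneg[of W1 "det J"] wdeg_nonneg[of W1 "det N"] by simp
qed

lemma N_adj: "det J \<cdot>\<^sub>m N = adj_mat J"
proof -
  have "adj_mat J = (N * J) * adj_mat J" using adj_mat(1)[OF J_carrier] by (simp add: NJ)
  also have "\<dots> = N * (J * adj_mat J)" using adj_mat(1)[OF J_carrier] J_carrier N_carrier by simp
  also have "\<dots> = N * (det J \<cdot>\<^sub>m 1\<^sub>m n)" by (simp add: adj_mat(2)[OF J_carrier])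
  also have "\<dots> = det J \<cdot>\<^sub>m (N * 1\<^sub>m n)" by (rule mult_smult_distrib[OF N_carrier one_carrier_mat])
  also have "\<dots> = det J \<cdot>\<^sub>m N" using N_carrier by simp
  finally show ?thesis by simp
qed

lemma N_entry: "i < n \<Longrightarrow> j < n \<Longrightarrow> det J * N $$ (i, j) = cofactor J j i"
proof -
  assume ij: "i < n" "j < n"
  have "(det J \<cdot>\<^sub>m N) $$ (i, j) = adj_mat J $$ (i, j)" by (simp add: N_adj)
  then show ?thesis using ij by (simp add: N_def adj_mat_def J_def)
qed

lemma deg_le_pd_f: "deg_le W1 (pd c (f r)) (tdeg (f r) - 1)"
  using deg_le_pd[OF deg_le_wdeg[of W1 "f r"], of c] by (simp add: tdeg_def)

lemma deg_le_neg_one_pow: "deg_le w ((-1) ^ k :: 'a mpoly) 0"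
proof -
  have "deg_le w (-1 :: 'a mpoly) 0" using deg_le_one[of w] by (simp add: deg_le_uminus)
  then show ?thesis using deg_le_pow[of w "-1 :: 'a mpoly" 0 k] by simp
qed

lemma cof_deg: "i < n \<Longrightarrow> deg_le W1 (cofactor J (n-1) i) ((\<Sum>r<n. tdeg (f r)) - int n - tdeg (f (n-1)) + 1)"
proof -
  assume i: "i < n"
  have "deg_le W1 (det (mat_delete J (n-1) i)) (\<Sum>r<n-1. tdeg (f r) - 1)"
  proof (rule deg_le_det)
    show "mat_delete J (n-1) i \<in> carrier_mat (n-1) (n-1)" using J_carrier by (rule mat_delete_carrier)
  next
    fix r c assume rc: "r < n - 1" "c < n - 1"
    then have "mat_delete J (n-1) i $$ (r, c) = pd (if c < i then c else Suc c) (f r)"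
      by (simp add: mat_delete_def J_def)
    then show "deg_le W1 (mat_delete J (n-1) i $$ (r, c)) (tdeg (f r) - 1)"
      by (simp only: deg_le_pd_f)
  qed
  moreover have "(\<Sum>r<n-1. tdeg (f r) - 1) = (\<Sum>r<n. tdeg (f r)) - int n - tdeg (f (n-1)) + 1"
  proof -
    have nn: "n = Suc (n - 1)" using n by simp
    have "(\<Sum>r<n. tdeg (f r)) = (\<Sum>r<n-1. tdeg (f r)) + tdeg (f (n-1))"
      by (subst nn, subst lessThan_Suc) simp
    moreover have "(\<Sum>r<n-1. tdeg (f r) - 1) = (\<Sum>r<n-1. tdeg (f r)) - int (n - 1)"
      by (simp add: sum_subtractf)
    ultimately show ?thesis using n by simp
  qed
  ultimately have "deg_le W1 (det (mat_delete J (n-1) i)) ((\<Sum>r<n. tdeg (f r)) - int n - tdeg (f (n-1)) + 1)"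
    by simp
  then show ?thesis
    unfolding cofactor_def using deg_le_mult[OF deg_le_neg_one_pow] by fastforce
qed

lemma N_deg: "i < n \<Longrightarrow> deg_le W1 (N $$ (i, n-1)) ((\<Sum>r<n. tdeg (f r)) - int n - tdeg (f (n-1)) + 1)"
proof (cases "N $$ (i, n-1) = 0")
  case True then show ?thesis by simp
next
  case False
  assume i: "i < n"
  let ?B = "(\<Sum>r<n. tdeg (f r)) - int n - tdeg (f (n-1)) + 1"
  have e: "det J * N $$ (i, n-1) = cofactor J (n-1) i" using N_entry[OF i] n by simp
  have nz: "det J * N $$ (i, n-1) \<noteq> 0" using False detJ_deg by simp
  have "wdeg W1 (det J * N $$ (i, n-1)) = wdeg W1 (N $$ (i, n-1))"
    using wdeg_mult[of "det J" "N $$ (i, n-1)" W1] False detJ_deg by simp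
  moreover have "wdeg W1 (det J * N $$ (i, n-1)) \<le> ?B"
    using e nz cof_deg[OF i] wdeg_le_nz by metis
  ultimately have "wdeg W1 (N $$ (i, n-1)) \<le> ?B" by simp
  then show ?thesis using deg_le_wdeg deg_le_mono by blast
qed

lemma deriv_bound:
  assumes Q: "Q \<in> polys n" and nz: "pd (n-1) Q \<noteq> 0"
  shows "tdeg (subst f (pd (n-1) Q)) \<le> tdeg (subst f Q) + ((\<Sum>r<n. tdeg (f r)) - int n) - tdeg (f (n-1))"
proof -
  let ?B = "(\<Sum>r<n. tdeg (f r)) - int n - tdeg (f (n-1)) + 1"
  define G where "G = subst f Q"
  have GP: "G \<in> polys n" unfolding G_def by (rule subst_f_polys[OF Q])
  have QG: "Q = subst g G" unfolding G_def by (simp add: gf_id[OF Q])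
  have "pd (n-1) Q = (\<Sum>i<n. subst g (pd i G) * pd (n-1) (g i))"
    unfolding QG by (rule chain_rule[OF GP])
  then have "subst f (pd (n-1) Q) = (\<Sum>i<n. subst f (subst g (pd i G)) * subst f (pd (n-1) (g i)))"
    by (simp add: subst_sum subst_mult)
  also have "\<dots> = (\<Sum>i<n. pd i G * N $$ (i, n-1))"
    using n by (intro sum.cong refl) (simp add: fg_id[OF pd_polys[OF GP]] N_def)
  finally have eq: "subst f (pd (n-1) Q) = (\<Sum>i<n. pd i G * N $$ (i, n-1))" .
  have "deg_le W1 (\<Sum>i<n. pd i G * N $$ (i, n-1)) (tdeg G - 1 + ?B)"
  proof (rule deg_le_sum)
    fix i assume "i \<in> {..<n}"
    then have i: "i < n" by simp
    have "deg_le W1 (pd i G) (tdeg G - 1)"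
      using deg_le_pd[OF deg_le_wdeg[of W1 G], of i] by (simp add: tdeg_def)
    then show "deg_le W1 (pd i G * N $$ (i, n-1)) (tdeg G - 1 + ?B)"
      by (intro deg_le_mult N_deg[OF i])
  qed
  moreover have "subst f (pd (n-1) Q) \<noteq> 0" by (rule subst_f_nz[OF pd_polys[OF Q] nz])
  ultimately have "wdeg W1 (subst f (pd (n-1) Q)) \<le> tdeg G - 1 + ?B"
    using eq wdeg_le_nz by metis
  then show ?thesis by (simp add: tdeg_def G_def)
qed

lemma iter_bound:
  assumes P: "P \<in> polys n" and nz: "(pd (n-1) ^^ k) P \<noteq> 0"
  shows "tdeg (subst f ((pd (n-1) ^^ k) P)) \<le> tdeg (subst f P) + int k * (((\<Sum>r<n. tdeg (f r)) - int n) - tdeg (f (n-1)))"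
  using nz
proof (induction k)
  case 0 then show ?case by simp
next
  case (Suc k)
  have nz': "(pd (n-1) ^^ k) P \<noteq> 0" using Suc.prems by (metis funpow.simps(2) o_apply pd_zero)
  have "tdeg (subst f ((pd (n-1) ^^ Suc k) P)) \<le> tdeg (subst f ((pd (n-1) ^^ k) P)) + ((\<Sum>r<n. tdeg (f r)) - int n) - tdeg (f (n-1))"
    using deriv_bound[OF pdk_polys[OF P] ] Suc.prems by simp
  then show ?case using Suc.IH[OF nz'] by (simp add: algebra_simps)
qed

end

lemma leibniz_claim:
  fixes R S DR :: "'a::comm_ring_1 mpoly"
  assumes DR: "DR = pd j R"
  shows "i \<le> k \<Longrightarrow> \<exists>T. (pd j ^^ i) (R ^ k * S) = R ^ (k - i) * (of_nat (\<Prod>t<i. k - t) * DR ^ i * S + R * T)"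
proof (induction i)
  case 0 then show ?case by (intro exI[of _ 0]) simp
next
  case (Suc i)
  then obtain T where T: "(pd j ^^ i) (R ^ k * S) = R ^ (k - i) * (of_nat (\<Prod>t<i. k - t) * DR ^ i * S + R * T)"
    by auto
  define m where "m = k - Suc i"
  have km: "k - i = Suc m" using Suc.prems by (simp add: m_def)
  define A where "A = of_nat (\<Prod>t<i. k - t) * DR ^ i * S + R * T"
  have "(pd j ^^ Suc i) (R ^ k * S) = pd j (R ^ Suc m * A)"
    using T by (simp add: km A_def)
  also have "\<dots> = of_nat (Suc m) * R ^ m * DR * A + R ^ Suc m * pd j A"
    by (simp only: pd_mult pd_pow DR)
  also have "\<dots> = R ^ m * (of_nat (\<Prod>t<Suc i. k - t) * DR ^ Suc i * S + R * (of_nat (Suc m) * DR * T + pd j A))"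
    using km by (simp add: A_def algebra_simps)
  finally show ?case by (intro exI[of _ "of_nat (Suc m) * DR * T + pd j A"]) (simp add: m_def)
qed

lemma wdeg_pow: "(R :: 'a::idom mpoly) \<noteq> 0 \<Longrightarrow> wdeg w (R ^ k) = int k * wdeg w R"
proof (induction k)
  case 0 then show ?case by (simp add: wdeg_def)
next
  case (Suc k)
  then show ?case using wdeg_mult[of R "R ^ k" w] by (simp add: algebra_simps)
qed

theorem proposition1:
  fixes n :: nat and f :: "nat \<Rightarrow> 'a::field_char_0 mpoly"
    and R P :: "'a mpoly" and k :: nat
  defines "d \<equiv> \<lambda>i. nat (tdeg (f i))"
    and "nabla \<equiv> (\<Sum>i<n. tdeg (f i)) - int n"
  assumes K: "alg_closed TYPE('a)"
    and n: "n \<ge> 1"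
    and aut: "poly_automorphism n f"
    and I: "{Q \<in> polys n. subst (\<lambda>i. hbar (f i)) Q = 0} = pideal n R"
    and R_irr: "irreducible_in n R"
    and R_der: "pderiv_var (n - 1) R \<noteq> 0"
    and P: "P \<in> polys n" "P \<noteq> 0"
    and k_in: "top_comp d P \<in> pideal n (R ^ k)"
    and k_out: "top_comp d P \<notin> pideal n (R ^ (k + 1))"
  shows "(tdeg (subst f ((pderiv_var (n - 1) ^^ k) P)) = wdeg d ((pderiv_var (n - 1) ^^ k) P)
          \<and> wdeg d ((pderiv_var (n - 1) ^^ k) P) = wdeg d P - int k * int (d (n - 1)))
         \<and> tdeg (subst f P) \<ge> wdeg d P - int k * nabla
         \<and> tdeg (subst f P) \<ge> int k * (wdeg d R - nabla)"
proof -
  obtain g where fP: "\<And>i. i < n \<Longrightarrow> f i \<in> polys n" and gP: "\<And>i. i < n \<Longrightarrow> g i \<in> polys n"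
    and gf: "\<And>i. i < n \<Longrightarrow> subst g (f i) = Var i" and fg: "\<And>i. i < n \<Longrightarrow> subst f (g i) = Var i"
    using aut unfolding poly_automorphism_def by blast
  interpret aut_setup n f g
    by unfold_locales (use n fP gP gf fg in auto)
  define hb where "hb = (\<lambda>i. hbar (f i))"
  define j where "j = n - 1"
  define Q where "Q = (pd j ^^ k) P"
  define T where "T = top_comp d P"
  have Rp: "R \<in> polys n" "R \<noteq> 0" using R_irr by (auto simp: irreducible_in_def)
  have Iin: "\<And>X. X \<in> polys n \<Longrightarrow> subst hb X = 0 \<longleftrightarrow> X \<in> pideal n R"
    using I unfolding hb_def by blast
  obtain S where S: "S \<in> polys n" "T = R ^ k * S"
    using k_in unfolding T_def pideal_def by blast
  have SnI: "S \<notin> pideal n R"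
  proof
    assume "S \<in> pideal n R"
    then obtain s where "s \<in> polys n" "S = R * s" unfolding pideal_def by blast
    then have "T = R ^ (k + 1) * s" using S by (simp add: algebra_simps)
    then show False using k_out \<open>s \<in> polys n\<close> unfolding T_def pideal_def by blast
  qed
  have hbS: "subst hb S \<noteq> 0" using Iin[OF S(1)] SnI by simp
  have hbR: "subst hb R = 0" using Iin[OF Rp(1)] unfolding pideal_def
    by (metis (mono_tags, lifting) mem_Collect_eq mult_1_right polys_one)
  define DR where "DR = pd j R"
  have DRnz: "DR \<noteq> 0" using R_der by (simp add: DR_def j_def)
  have DRp: "DR \<in> polys n" unfolding DR_def using pd_polys[OF Rp(1)] .
  have hbDR: "subst hb DR \<noteq> 0"
  proof
    assume "subst hb DR = 0"
    then have "DR \<in> pideal n R" using Iin[OF DRp] by simp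
    then obtain s where s: "DR = R * s" unfolding pideal_def by blast
    then have snz: "s \<noteq> 0" using DRnz by auto
    have "wdeg (ew j) DR < wdeg (ew j) R" unfolding DR_def by (rule vdeg_pd) (use DRnz DR_def in simp)
    moreover have "wdeg (ew j) DR = wdeg (ew j) R + wdeg (ew j) s"
      using s wdeg_mult[OF Rp(2) snz] by simp
    ultimately show False using wdeg_nonneg[of "ew j" s] by simp
  qed
  obtain TT where TT: "(pd j ^^ k) (R ^ k * S) = R ^ (k - k) * (of_nat (\<Prod>t<k. k - t) * DR ^ k * S + R * TT)"
    using leibniz_claim[OF DR_def, of k k S] by auto
  define X where "X = (pd j ^^ k) T"
  have c: "(of_nat (\<Prod>t<k. k - t) :: 'a mpoly) \<noteq> 0"
  proof -
    have "(\<Prod>t<k. k - t) \<noteq> 0" by (simp add: prod_zero_iff)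
    then show ?thesis by (metis of_nat_eq_0_iff)
  qed
  have hbX: "subst hb X = of_nat (\<Prod>t<k. k - t) * subst hb DR ^ k * subst hb S"
    unfolding X_def S(2) TT by (simp only: subst_add subst_mult subst_pow subst_of_nat hbR) simp
  then have hbXnz: "subst hb X \<noteq> 0" using c hbDR hbS by simp
  then have Xnz: "X \<noteq> 0" by auto
  have tbQ: "tb d Q (wdeg d P - int k * int (d j)) X"
    unfolding Q_def X_def T_def by (rule tb_pdk[OF tb_top])
  from tb_wdeg[OF tbQ Xnz] have wQ: "wdeg d Q = wdeg d P - int k * int (d j)" and tQ: "top_comp d Q = X"
    by auto
  have tbf: "tb W1 (f i) (int (d i)) (hb i)" for i
  proof -
    have "int (d i) = wdeg W1 (f i)" using wdeg_nonneg[of W1 "f i"] by (simp add: d_def tdeg_def)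
    then show ?thesis using tb_top[of W1 "f i"] by (simp only: hb_def hbar_def)
  qed
  have tbS: "tb W1 (subst f Q) (wdeg d Q) (subst hb (top_comp d Q))"
    by (rule tb_subst[OF tbf])
  have part1: "tdeg (subst f Q) = wdeg d Q"
    using tb_wdeg[OF tbS] hbXnz tQ by (simp add: tdeg_def)
  have Qnz: "Q \<noteq> 0" using tQ Xnz by (auto simp: top_comp_hp)
  have dj: "int (d j) = tdeg (f j)" using wdeg_nonneg[of W1 "f j"] by (simp add: d_def tdeg_def)
  have ib: "tdeg (subst f Q) \<le> tdeg (subst f P) + int k * (nabla - tdeg (f j))"
    using iter_bound[OF P(1), of k] Qnz unfolding Q_def j_def nabla_def by simp
  have part2: "tdeg (subst f P) \<ge> wdeg d P - int k * nabla"
    using ib part1 wQ dj by (simp add: algebra_simps)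
  have Tnz: "T \<noteq> 0" unfolding T_def using top_comp_nz[OF P(2)] .
  have wT: "wdeg d T = wdeg d P"
  proof -
    have "tb d T (wdeg d P) T"
      unfolding T_def tb_def using deg_le_wdeg[of d P]
      by (simp add: top_comp_hp hp_ishom ishom_hp ishom_deg_le)
    then show ?thesis using tb_wdeg Tnz by blast
  qed
  have Snz: "S \<noteq> 0" using S(2) Tnz by auto
  have "wdeg d T = int k * wdeg d R + wdeg d S"
    using S(2) wdeg_mult[of "R ^ k" S d] Snz Rp(2) wdeg_pow[OF Rp(2)] by simp
  then have "wdeg d P \<ge> int k * wdeg d R" using wT wdeg_nonneg[of d S] by simp
  then have part3: "tdeg (subst f P) \<ge> int k * (wdeg d R - nabla)"
    using part2 by (simp add: algebra_simps)
  show ?thesis using part1 wQ part2 part3 unfolding Q_def j_def by simp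
qed

end
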